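(* Let $\Phi=\{\varphi_i\}_{i\in\Lambda}$ be a similarity IFS in $\mathbb{R}^d$ with attractor $K$, let $F\subset\mathbb{R}^d$ be a nonempty compact set with $\varphi_iF\subseteq F$ for all $i\in\Lambda$, and let $c>0$. (1) If $\Phi$ is $(F,c)$-diffuse, then $\Phi$ is $(K,c)$-diffuse. (2) If $\Phi$ is $(K,c)$-diffuse, then for every $c'\in(0,c)$ and all large enough $n$, the IFS $\{\varphi_i\}_{i\in\Lambda^n}$ is $(F,c')$-diffuse.
   Context: A similarity IFS is a finite family of contracting similarities $\varphi_i$ of $\mathbb{R}^d$; its attractor $K$ is the unique nonempty compact set with $K=\bigcup_i\varphi_iK$; for $i=i_1\dots i_n$, $\varphi_i=\varphi_{i_1}\circ\dots\circ\varphi_{i_n}$. For a compact $F$ with $\varphi_iF\subseteq F$ for all $i$ and $c>0$, an IFS $\{\varphi_i\}_{i\in A}$ is $(F,c)$-diffuse if for every affine hyperplane $\mathcal{L}\subseteq\mathbb{R}^d$ there is $i\in A$ with $\varphi_iF\cap\mathcal{L}^{(c)}=\emptyset$, where $\mathcal{L}^{(c)}$ is the open $c$-neighborhood of $\mathcal{L}$. *)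

theory Defs
  imports "HOL-Analysis.Analysis"
begin

definition contracting_similarity :: "('a::euclidean_space \<Rightarrow> 'a) \<Rightarrow> bool" where
  "contracting_similarity f \<longleftrightarrow>
     (\<exists>r. 0 < r \<and> r < 1 \<and> (\<forall>x y. dist (f x) (f y) = r * dist x y))"

definition similarity_IFS :: "'i set \<Rightarrow> ('i \<Rightarrow> 'a::euclidean_space \<Rightarrow> 'a) \<Rightarrow> bool" where
  "similarity_IFS \<Lambda> \<phi> \<longleftrightarrow> finite \<Lambda> \<and> \<Lambda> \<noteq> {} \<and> (\<forall>i\<in>\<Lambda>. contracting_similarity (\<phi> i))"

definition is_attractor :: "'i set \<Rightarrow> ('i \<Rightarrow> 'a::euclidean_space \<Rightarrow> 'a) \<Rightarrow> 'a set \<Rightarrow> bool" where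
  "is_attractor \<Lambda> \<phi> K \<longleftrightarrow> compact K \<and> K \<noteq> {} \<and> K = (\<Union>i\<in>\<Lambda>. \<phi> i ` K)"

definition affine_hyperplane :: "'a::euclidean_space set \<Rightarrow> bool" where
  "affine_hyperplane L \<longleftrightarrow> (\<exists>a b. a \<noteq> 0 \<and> L = {x. a \<bullet> x = b})"

definition open_nbhd :: "'a::metric_space set \<Rightarrow> real \<Rightarrow> 'a set" where
  "open_nbhd L c = {x. \<exists>y\<in>L. dist x y < c}"

definition diffuse :: "'a::euclidean_space set \<Rightarrow> real \<Rightarrow> 'i set \<Rightarrow> ('i \<Rightarrow> 'a \<Rightarrow> 'a) \<Rightarrow> bool" where
  "diffuse F c A \<phi> \<longleftrightarrow>
     (\<forall>L. affine_hyperplane L \<longrightarrow> (\<exists>i\<in>A. \<phi> i ` F \<inter> open_nbhd L c = {}))"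

text \<open>Composition along a word: phi_{i1...in} = phi_i1 o ... o phi_in.\<close>
definition word_map :: "('i \<Rightarrow> 'a \<Rightarrow> 'a) \<Rightarrow> 'i list \<Rightarrow> 'a \<Rightarrow> 'a" where
  "word_map \<phi> w = foldr (\<lambda>i f. \<phi> i \<circ> f) w id"

definition words :: "'i set \<Rightarrow> nat \<Rightarrow> 'i list set" where
  "words \<Lambda> n = {w. set w \<subseteq> \<Lambda> \<and> length w = n}"

end

theory Submission
  imports Defs
begin

lemma word_map_Cons: "word_map \<phi> (i # w) = \<phi> i \<circ> word_map \<phi> w"
  by (simp add: word_map_def)

lemma word_map_Nil: "word_map \<phi> [] = id"
  by (simp add: word_map_def)

lemma word_map_inv:
  assumes "\<forall>i\<in>\<Lambda>. \<phi> i ` K \<subseteq> K" "set w \<subseteq> \<Lambda>"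
  shows "word_map \<phi> w ` K \<subseteq> K"
  using assms(2)
proof (induction w)
  case Nil then show ?case by (simp add: word_map_Nil)
next
  case (Cons a w)
  then have "word_map \<phi> w ` K \<subseteq> K" "a \<in> \<Lambda>" by auto
  then show ?case using assms(1) by (auto simp: word_map_Cons image_subset_iff)
qed

lemma word_map_lip:
  assumes "\<forall>i\<in>\<Lambda>. \<forall>x y. dist (\<phi> i x) (\<phi> i y) \<le> R * dist x y" "R \<ge> 0" "set w \<subseteq> \<Lambda>"
  shows "dist (word_map \<phi> w x) (word_map \<phi> w y) \<le> R ^ length w * dist x y"
  using assms(3)
proof (induction w)
  case Nil then show ?case by (simp add: word_map_Nil)
next
  case (Cons a w)
  then have h: "dist (word_map \<phi> w x) (word_map \<phi> w y) \<le> R ^ length w * dist x y" "a \<in> \<Lambda>" by auto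
  have "dist (word_map \<phi> (a#w) x) (word_map \<phi> (a#w) y)
      = dist (\<phi> a (word_map \<phi> w x)) (\<phi> a (word_map \<phi> w y))" by (simp add: word_map_Cons)
  also have "\<dots> \<le> R * dist (word_map \<phi> w x) (word_map \<phi> w y)" using assms(1) h(2) by blast
  also have "\<dots> \<le> R * (R ^ length w * dist x y)" using h(1) assms(2) by (rule mult_left_mono)
  finally show ?case by simp
qed

theorem lemma3p8:
  fixes \<Lambda> :: "'i set" and \<phi> :: "'i \<Rightarrow> 'a::euclidean_space \<Rightarrow> 'a"
    and K F :: "'a set" and c :: real
  assumes "similarity_IFS \<Lambda> \<phi>"
    and "is_attractor \<Lambda> \<phi> K"
    and "compact F" and "F \<noteq> {}"
    and "\<forall>i\<in>\<Lambda>. \<phi> i ` F \<subseteq> F"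
    and "c > 0"
  shows "(diffuse F c \<Lambda> \<phi> \<longrightarrow> diffuse K c \<Lambda> \<phi>)
       \<and> (diffuse K c \<Lambda> \<phi> \<longrightarrow>
           (\<forall>c'. 0 < c' \<and> c' < c \<longrightarrow>
              (\<exists>N. \<forall>n\<ge>N. diffuse F c' (words \<Lambda> n) (word_map \<phi>))))"
proof -
  have fin: "finite \<Lambda>" and ne: "\<Lambda> \<noteq> {}" and cs: "\<forall>i\<in>\<Lambda>. contracting_similarity (\<phi> i)"
    using assms(1) by (auto simp: similarity_IFS_def)
  have cK: "compact K" and neK: "K \<noteq> {}" and KK: "K = (\<Union>i\<in>\<Lambda>. \<phi> i ` K)"
    using assms(2) by (auto simp: is_attractor_def)
  have Kinv: "\<forall>i\<in>\<Lambda>. \<phi> i ` K \<subseteq> K" using KK by blast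
  obtain \<rho> where \<rho>: "\<And>i. i \<in> \<Lambda> \<Longrightarrow> 0 < \<rho> i \<and> \<rho> i < 1 \<and> (\<forall>x y. dist (\<phi> i x) (\<phi> i y) = \<rho> i * dist x y)"
  proof -
    have "\<forall>i\<in>\<Lambda>. \<exists>r. 0 < r \<and> r < 1 \<and> (\<forall>x y. dist (\<phi> i x) (\<phi> i y) = r * dist x y)"
      using cs unfolding contracting_similarity_def by blast
    then obtain g where "\<forall>i\<in>\<Lambda>. 0 < g i \<and> g i < 1 \<and> (\<forall>x y. dist (\<phi> i x) (\<phi> i y) = g i * dist x y)"
      by (rule bchoice[elim_format]) blast
    then show ?thesis using that by blast
  qed
  define R where "R = Max (\<rho> ` \<Lambda>)"
  have Rin: "R \<in> \<rho> ` \<Lambda>" unfolding R_def using fin ne by (intro Max_in) auto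
  have R01: "0 < R" "R < 1" using Rin \<rho> by auto
  have Rge: "\<And>i. i \<in> \<Lambda> \<Longrightarrow> \<rho> i \<le> R" unfolding R_def using fin by auto
  have lip: "\<forall>i\<in>\<Lambda>. \<forall>x y. dist (\<phi> i x) (\<phi> i y) \<le> R * dist x y"
  proof (intro ballI allI)
    fix i x y assume i: "i \<in> \<Lambda>"
    then show "dist (\<phi> i x) (\<phi> i y) \<le> R * dist x y"
      using \<rho>[OF i] Rge[OF i] by (simp add: mult_right_mono)
  qed
  have KF: "K \<subseteq> F"
  proof -
    have "continuous_on K (\<lambda>x. infdist x F)" by (rule continuous_on_infdist) (rule continuous_on_id)
    then have "\<exists>x\<in>K. \<forall>y\<in>K. infdist y F \<le> infdist x F"
      by (rule continuous_attains_sup[OF cK neK])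
    then obtain x0 where x0: "x0 \<in> K" "\<And>x. x \<in> K \<Longrightarrow> infdist x F \<le> infdist x0 F"
      by blast
    obtain i y where iy: "i \<in> \<Lambda>" "y \<in> K" "x0 = \<phi> i y" using x0(1) KK by blast
    obtain f where f: "f \<in> F" "infdist y F = dist y f"
      by (rule infdist_attains_inf[OF compact_imp_closed[OF assms(3)] assms(4), of y])
    have "\<phi> i f \<in> F" using assms(5) iy(1) f(1) by blast
    then have "infdist x0 F \<le> dist x0 (\<phi> i f)" by (rule infdist_le)
    also have "\<dots> = \<rho> i * infdist y F" using \<rho>[OF iy(1)] iy(3) f(2) by simp
    also have "\<dots> \<le> \<rho> i * infdist x0 F" using x0(2)[OF iy(2)] \<rho>[OF iy(1)] by (simp add: mult_left_mono)
    finally have le: "infdist x0 F \<le> \<rho> i * infdist x0 F" .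
    have "infdist x0 F = 0"
    proof (rule ccontr)
      assume "infdist x0 F \<noteq> 0"
      then have "infdist x0 F > 0" using infdist_nonneg[of x0 F] by linarith
      then have "\<rho> i * infdist x0 F < 1 * infdist x0 F" using \<rho>[OF iy(1)]
        by (intro mult_strict_right_mono) auto
      then show False using le by simp
    qed
    then have "\<And>x. x \<in> K \<Longrightarrow> infdist x F = 0" using x0(2) infdist_nonneg
      by (metis order_antisym)
    then show ?thesis using in_closure_iff_infdist_zero[OF assms(4)]
      closure_closed[OF compact_imp_closed[OF assms(3)]] by blast
  qed
  have P1: "diffuse F c \<Lambda> \<phi> \<longrightarrow> diffuse K c \<Lambda> \<phi>"
    unfolding diffuse_def
  proof (intro impI allI)
    fix L :: "'a set"
    assume H: "\<forall>L. affine_hyperplane L \<longrightarrow> (\<exists>i\<in>\<Lambda>. \<phi> i ` F \<inter> open_nbhd L c = {})"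
      and hL: "affine_hyperplane L"
    then obtain i where i: "i \<in> \<Lambda>" "\<phi> i ` F \<inter> open_nbhd L c = {}" by blast
    have "\<phi> i ` K \<subseteq> \<phi> i ` F" using KF by (rule image_mono)
    then have "\<phi> i ` K \<inter> open_nbhd L c = {}" using i(2) by blast
    then show "\<exists>i\<in>\<Lambda>. \<phi> i ` K \<inter> open_nbhd L c = {}" using i(1) by blast
  qed
  have P2: "diffuse K c \<Lambda> \<phi> \<longrightarrow>
           (\<forall>c'. 0 < c' \<and> c' < c \<longrightarrow>
              (\<exists>N. \<forall>n\<ge>N. diffuse F c' (words \<Lambda> n) (word_map \<phi>)))"
  proof (intro impI allI)
    fix c' assume dK: "diffuse K c \<Lambda> \<phi>" and c': "0 < c' \<and> c' < c"
    have "bounded (F \<union> K)" using bounded_Un compact_imp_bounded assms(3) cK by blast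
    then obtain x e where xe: "\<forall>y\<in>F \<union> K. dist x y \<le> e" unfolding bounded_def by blast
    define B where "B = 2 * e"
    have B: "\<And>y z. y \<in> F \<Longrightarrow> z \<in> K \<Longrightarrow> dist y z \<le> B"
    proof -
      fix y z assume "y \<in> F" "z \<in> K"
      then have "dist x y \<le> e" "dist x z \<le> e" using xe by auto
      then show "dist y z \<le> B" unfolding B_def using dist_triangle3[of y z x] by linarith
    qed
    have "norm R < 1" using R01 by simp
    then have "(\<lambda>n. R ^ n) \<longlonglongrightarrow> 0" by (rule LIMSEQ_power_zero)
    then have "(\<lambda>n. R ^ n * B) \<longlonglongrightarrow> 0 * B"
      by (rule tendsto_mult) (rule tendsto_const)
    then have t0: "(\<lambda>n. R ^ n * B) \<longlonglongrightarrow> 0" by simp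
    have "0 < c - c'" using c' by simp
    with t0 have "eventually (\<lambda>n. R ^ n * B < c - c') sequentially"
      by (rule order_tendstoD(2))
    then obtain N0 where N0: "\<And>n. n \<ge> N0 \<Longrightarrow> R ^ n * B < c - c'"
      unfolding eventually_sequentially by blast
    show "\<exists>N. \<forall>n\<ge>N. diffuse F c' (words \<Lambda> n) (word_map \<phi>)"
    proof (intro exI[of _ "Suc N0"] allI impI)
      fix n assume n: "n \<ge> Suc N0"
      then obtain m where m: "n = Suc m" by (cases n) auto
      show "diffuse F c' (words \<Lambda> n) (word_map \<phi>)"
        unfolding diffuse_def
      proof (intro allI impI)
        fix L :: "'a set" assume "affine_hyperplane L"
        then obtain i where i: "i \<in> \<Lambda>" "\<phi> i ` K \<inter> open_nbhd L c = {}"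
          using dK unfolding diffuse_def by blast
        define w where "w = replicate n i"
        have w: "w \<in> words \<Lambda> n" unfolding w_def words_def using i by auto
        have sw: "set w \<subseteq> \<Lambda>" "length w = n" using w by (auto simp: words_def)
        have "word_map \<phi> w ` F \<inter> open_nbhd L c' = {}"
        proof (rule ccontr)
          assume "word_map \<phi> w ` F \<inter> open_nbhd L c' \<noteq> {}"
          then obtain y p where yp: "y \<in> F" "p \<in> L" "dist (word_map \<phi> w y) p < c'"
            unfolding open_nbhd_def by blast
          obtain z where z: "z \<in> K" using neK by blast
          have "set (replicate m i) \<subseteq> \<Lambda>" using i(1) by (simp add: set_replicate_conv_if)
          then have "word_map \<phi> (replicate m i) z \<in> K"
            using word_map_inv[OF Kinv, of "replicate m i"] z by blast
          then have wz: "word_map \<phi> w z \<in> \<phi> i ` K"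
            unfolding w_def m by (simp add: word_map_Cons)
          have "dist (word_map \<phi> w y) (word_map \<phi> w z) \<le> R ^ n * dist y z"
            using word_map_lip[OF lip _ sw(1)] R01 sw(2) by simp
          also have "\<dots> \<le> R ^ n * B" using B[OF yp(1) z] R01 by (simp add: mult_left_mono)
          also have "\<dots> < c - c'" using N0 n by simp
          finally have "dist (word_map \<phi> w z) p < c"
            using yp(3) dist_triangle3[of "word_map \<phi> w z" p "word_map \<phi> w y"] by linarith
          then have "word_map \<phi> w z \<in> open_nbhd L c" using yp(2) unfolding open_nbhd_def by blast
          then show False using wz i(2) by blast
        qed
        then show "\<exists>v\<in>words \<Lambda> n. word_map \<phi> v ` F \<inter> open_nbhd L c' = {}" using w by blast
      qed
    qed
  qed
  show ?thesis using P1 P2 by blast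
qed

end
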